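(* Let $r \ge s \ge 2$ be integers. Then $$\mathrm{gp_e}(P_r \,\square\, P_s) = \begin{cases} r+2, & s = 2,\\ 2r, & s = 3,\\ 2r+2s-8, & s \ge 4.\end{cases}$$
   Context: $P_n$ denotes the path on $n$ vertices. The Cartesian product $G \,\square\, H$ has vertex set $V(G)\times V(H)$, with $(g,h)$ adjacent to $(g',h')$ iff either $gg' \in E(G)$ and $h = h'$, or $g = g'$ and $hh' \in E(H)$. A set $S$ of edges of a graph $G$ is an edge general position set if no geodesic (shortest path) of $G$ contains three edges of $S$; $\mathrm{gp_e}(G)$ is the maximum cardinality of an edge general position set of $G$. *)

theory Defs
  imports Main
begin

definition walk :: "'a set \<Rightarrow> ('a \<Rightarrow> 'a \<Rightarrow> bool) \<Rightarrow> 'a list \<Rightarrow> bool" where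
  "walk V adj xs \<longleftrightarrow> xs \<noteq> [] \<and> set xs \<subseteq> V \<and>
     (\<forall>i. i + 1 < length xs \<longrightarrow> adj (xs ! i) (xs ! (i + 1)))"

definition geodesic :: "'a set \<Rightarrow> ('a \<Rightarrow> 'a \<Rightarrow> bool) \<Rightarrow> 'a list \<Rightarrow> bool" where
  "geodesic V adj xs \<longleftrightarrow> walk V adj xs \<and>
     (\<forall>ys. walk V adj ys \<and> hd ys = hd xs \<and> last ys = last xs \<longrightarrow> length xs \<le> length ys)"

definition walk_edges :: "'a list \<Rightarrow> 'a set set" where
  "walk_edges xs = {{xs ! i, xs ! (i + 1)} | i. i + 1 < length xs}"

definition graph_edges :: "'a set \<Rightarrow> ('a \<Rightarrow> 'a \<Rightarrow> bool) \<Rightarrow> 'a set set" where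
  "graph_edges V adj = {{u, v} | u v. u \<in> V \<and> v \<in> V \<and> adj u v}"

definition edge_gp_set :: "'a set \<Rightarrow> ('a \<Rightarrow> 'a \<Rightarrow> bool) \<Rightarrow> 'a set set \<Rightarrow> bool" where
  "edge_gp_set V adj S \<longleftrightarrow> S \<subseteq> graph_edges V adj \<and>
     (\<forall>xs. geodesic V adj xs \<longrightarrow>
        \<not> (\<exists>e1 e2 e3. e1 \<in> S \<and> e2 \<in> S \<and> e3 \<in> S \<and> e1 \<noteq> e2 \<and> e1 \<noteq> e3 \<and> e2 \<noteq> e3 \<and>
               e1 \<in> walk_edges xs \<and> e2 \<in> walk_edges xs \<and> e3 \<in> walk_edges xs))"

definition gp_e :: "'a set \<Rightarrow> ('a \<Rightarrow> 'a \<Rightarrow> bool) \<Rightarrow> nat" where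
  "gp_e V adj = Max (card ` {S. edge_gp_set V adj S})"

definition path_V :: "nat \<Rightarrow> nat set" where
  "path_V n = {0..<n}"

definition path_adj :: "nat \<Rightarrow> nat \<Rightarrow> bool" where
  "path_adj a b \<longleftrightarrow> a + 1 = b \<or> b + 1 = a"

definition cart_adj :: "('a \<Rightarrow> 'a \<Rightarrow> bool) \<Rightarrow> ('b \<Rightarrow> 'b \<Rightarrow> bool) \<Rightarrow> 'a \<times> 'b \<Rightarrow> 'a \<times> 'b \<Rightarrow> bool" where
  "cart_adj adjG adjH p q \<longleftrightarrow>
     (adjG (fst p) (fst q) \<and> snd p = snd q) \<or> (fst p = fst q \<and> adjH (snd p) (snd q))"

end

theory Submission
  imports Defs
begin

definition dn :: "nat \<Rightarrow> nat \<Rightarrow> int" where "dn a b = \<bar>int a - int b\<bar>"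
definition md :: "nat \<times> nat \<Rightarrow> nat \<times> nat \<Rightarrow> int" where
  "md p q = dn (fst p) (fst q) + dn (snd p) (snd q)"

abbreviation GA :: "nat \<times> nat \<Rightarrow> nat \<times> nat \<Rightarrow> bool" where "GA \<equiv> cart_adj path_adj path_adj"
abbreviation GV :: "nat \<Rightarrow> nat \<Rightarrow> (nat \<times> nat) set" where "GV r s \<equiv> path_V r \<times> path_V s"

lemma GV_iff: "p \<in> GV r s \<longleftrightarrow> fst p < r \<and> snd p < s"
  by (cases p) (auto simp: path_V_def)

lemma adj_md: "GA p q \<Longrightarrow> md p q = 1"
  by (auto simp: cart_adj_def path_adj_def md_def dn_def)

lemma walk_nth_adj: "walk V adj xs \<Longrightarrow> i + 1 < length xs \<Longrightarrow> adj (xs!i) (xs!(i+1))"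
  by (simp add: walk_def)

lemma md_tri: "md a c \<le> md a b + md b c"
  unfolding md_def dn_def by arith

lemma walk_md:
  assumes "walk V GA xs" "i \<le> j" "j < length xs"
  shows "md (xs!i) (xs!j) \<le> int (j - i)"
  using assms(2,3)
proof (induction j)
  case 0 then show ?case by (simp add: md_def dn_def)
next
  case (Suc j)
  show ?case
  proof (cases "i = Suc j")
    case True then show ?thesis by (simp add: md_def dn_def)
  next
    case False
    then have ij: "i \<le> j" using Suc by simp
    then have ih: "md (xs!i) (xs!j) \<le> int (j - i)" using Suc by simp
    have "GA (xs!j) (xs!(j+1))" using assms(1) Suc.prems walk_nth_adj by fastforce
    then have "md (xs!j) (xs!Suc j) = 1" using adj_md by simp
    moreover have "md (xs!i) (xs!Suc j) \<le> md (xs!i) (xs!j) + md (xs!j) (xs!Suc j)"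
      by (rule md_tri)
    ultimately show ?thesis using ih ij by simp
  qed
qed

lemma walk_Cons: "walk V adj ys \<Longrightarrow> p \<in> V \<Longrightarrow> adj p (hd ys) \<Longrightarrow> walk V adj (p # ys)"
  unfolding walk_def
  by (auto simp: nth_Cons hd_conv_nth split: nat.splits)

lemma short_walk:
  "p \<in> GV r s \<Longrightarrow> q \<in> GV r s \<Longrightarrow>
   \<exists>ys. walk (GV r s) GA ys \<and> hd ys = p \<and> last ys = q \<and> int (length ys) = md p q + 1"
proof (induction "nat (md p q)" arbitrary: p)
  case 0
  then have "md p q = 0" by (simp add: md_def dn_def)
  then have "p = q" by (cases p, cases q) (simp add: md_def dn_def; arith)
  then show ?case using 0 by (intro exI[of _ "[p]"]) (simp add: walk_def md_def dn_def)
next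
  case (Suc n)
  define p' where "p' = (if fst p < fst q then (fst p+1, snd p) else if fst q < fst p then (fst p - 1, snd p)
     else if snd p < snd q then (fst p, snd p + 1) else (fst p, snd p - 1))"
  have neq: "p \<noteq> q" using Suc.hyps(2) by (auto simp: md_def dn_def)
  have p'V: "p' \<in> GV r s" using Suc.prems neq unfolding p'_def GV_iff
    by (cases p, cases q) auto
  have adj: "GA p p'" using neq unfolding p'_def cart_adj_def path_adj_def
    by (cases p, cases q) auto
  have mdp: "md p' q = md p q - 1" using neq unfolding p'_def md_def dn_def
    by (cases p, cases q) auto
  then have "n = nat (md p' q)" using Suc.hyps(2) by simp
  from Suc.hyps(1)[OF this p'V Suc.prems(2)] obtain ys where
    ys: "walk (GV r s) GA ys" "hd ys = p'" "last ys = q" "int (length ys) = md p' q + 1" by blast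
  have "ys \<noteq> []" using ys(1) by (simp add: walk_def)
  then show ?case using ys mdp adj Suc.prems
    by (intro exI[of _ "p # ys"]) (auto intro!: walk_Cons)
qed

lemma walk_lb:
  assumes "walk V GA ys"
  shows "md (hd ys) (last ys) + 1 \<le> int (length ys)"
proof -
  have ne: "ys \<noteq> []" using assms by (simp add: walk_def)
  have "md (ys!0) (ys!(length ys - 1)) \<le> int (length ys - 1 - 0)"
    using walk_md[OF assms, of 0 "length ys - 1"] ne by simp
  moreover have "int (length ys - 1 - 0) = int (length ys) - 1" using ne by (cases ys) auto
  ultimately show ?thesis using ne by (simp add: hd_conv_nth last_conv_nth)
qed

lemma geo_len:
  assumes "geodesic (GV r s) GA xs"
  shows "int (length xs) = md (hd xs) (last xs) + 1"
proof -
  have w: "walk (GV r s) GA xs" and ne: "xs \<noteq> []" using assms by (auto simp: geodesic_def walk_def)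
  have "hd xs \<in> GV r s" "last xs \<in> GV r s" using w ne by (auto simp: walk_def)
  from short_walk[OF this] obtain ys where ys: "walk (GV r s) GA ys" "hd ys = hd xs" "last ys = last xs"
      "int (length ys) = md (hd xs) (last xs) + 1" by blast
  have "length xs \<le> length ys" using assms ys unfolding geodesic_def by auto
  moreover have "md (hd xs) (last xs) + 1 \<le> int (length xs)" using walk_lb[OF w] .
  ultimately show ?thesis using ys by linarith
qed

lemma geo_intro:
  assumes "walk (GV r s) GA xs" "int (length xs) = md (hd xs) (last xs) + 1"
  shows "geodesic (GV r s) GA xs"
  unfolding geodesic_def
proof (intro conjI allI impI)
  fix ys assume h: "walk (GV r s) GA ys \<and> hd ys = hd xs \<and> last ys = last xs"
  then show "length xs \<le> length ys" using walk_lb[of "GV r s" ys] assms(2) by auto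
qed (rule assms(1))



definition mono_seq :: "(nat \<Rightarrow> nat) \<Rightarrow> nat \<Rightarrow> bool" where
 "mono_seq f n \<longleftrightarrow> (\<forall>a b. a \<le> b \<longrightarrow> b < n \<longrightarrow> f a \<le> f b) \<or> (\<forall>a b. a \<le> b \<longrightarrow> b < n \<longrightarrow> f b \<le> f a)"

lemma tri3: "\<bar>(a::int) - d\<bar> \<le> \<bar>a - b\<bar> + \<bar>b - c\<bar> + \<bar>c - d\<bar>"
  by arith

lemma mono3: "\<bar>(x0::int) - xn\<bar> = \<bar>x0 - xa\<bar> + \<bar>xa - xb\<bar> + \<bar>xb - xn\<bar> \<Longrightarrow> x0 \<le> xn \<Longrightarrow> xa \<le> xb"
  by arith

lemma mono3': "\<bar>(x0::int) - xn\<bar> = \<bar>x0 - xa\<bar> + \<bar>xa - xb\<bar> + \<bar>xb - xn\<bar> \<Longrightarrow> xn \<le> x0 \<Longrightarrow> xb \<le> xa"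
  by arith

lemma geo_key:
  assumes g: "geodesic (GV r s) GA xs" and ab: "a \<le> b" "b < length xs"
  shows "dn (fst (xs!0)) (fst (xs!(length xs - 1))) = dn (fst (xs!0)) (fst (xs!a)) + dn (fst (xs!a)) (fst (xs!b)) + dn (fst (xs!b)) (fst (xs!(length xs - 1)))
       \<and> dn (snd (xs!0)) (snd (xs!(length xs - 1))) = dn (snd (xs!0)) (snd (xs!a)) + dn (snd (xs!a)) (snd (xs!b)) + dn (snd (xs!b)) (snd (xs!(length xs - 1)))"
proof -
  have w: "walk (GV r s) GA xs" using g by (simp add: geodesic_def)
  have ne: "xs \<noteq> []" using w by (simp add: walk_def)
  let ?n = "length xs"
  have L: "int ?n = md (xs!0) (xs!(?n - 1)) + 1" using geo_len[OF g] ne by (simp add: hd_conv_nth last_conv_nth)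
  have 1: "md (xs!0) (xs!a) \<le> int a" using walk_md[OF w, of 0 a] ab by simp
  have 2: "md (xs!a) (xs!b) \<le> int b - int a" using walk_md[OF w, of a b] ab by (simp add: of_nat_diff)
  have 3: "md (xs!b) (xs!(?n - 1)) \<le> int ?n - 1 - int b" using walk_md[OF w, of b "?n - 1"] ab by (simp add: of_nat_diff algebra_simps)
  have t1: "dn (fst (xs!0)) (fst (xs!(?n - 1))) \<le> dn (fst (xs!0)) (fst (xs!a)) + dn (fst (xs!a)) (fst (xs!b)) + dn (fst (xs!b)) (fst (xs!(?n - 1)))"
    unfolding dn_def by (rule tri3)
  have t2: "dn (snd (xs!0)) (snd (xs!(?n - 1))) \<le> dn (snd (xs!0)) (snd (xs!a)) + dn (snd (xs!a)) (snd (xs!b)) + dn (snd (xs!b)) (snd (xs!(?n - 1)))"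
    unfolding dn_def by (rule tri3)
  show ?thesis using 1 2 3 L t1 t2 unfolding md_def by linarith
qed

lemma geo_mono1:
  assumes g: "geodesic (GV r s) GA xs"
  shows "mono_seq (\<lambda>t. fst (xs!t)) (length xs)"
proof (cases "fst (xs!0) \<le> fst (xs!(length xs - 1))")
  case True
  have "\<forall>a b. a \<le> b \<longrightarrow> b < length xs \<longrightarrow> fst (xs!a) \<le> fst (xs!b)"
  proof (intro allI impI)
    fix a b assume ab: "a \<le> b" "b < length xs"
    have "int (fst (xs!a)) \<le> int (fst (xs!b))"
      by (rule mono3[OF conjunct1[OF geo_key[OF g ab], unfolded dn_def]]) (use True in simp)
    then show "fst (xs!a) \<le> fst (xs!b)" by simp
  qed
  then show ?thesis unfolding mono_seq_def by blast
next
  case False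
  have "\<forall>a b. a \<le> b \<longrightarrow> b < length xs \<longrightarrow> fst (xs!b) \<le> fst (xs!a)"
  proof (intro allI impI)
    fix a b assume ab: "a \<le> b" "b < length xs"
    have "int (fst (xs!b)) \<le> int (fst (xs!a))"
      by (rule mono3'[OF conjunct1[OF geo_key[OF g ab], unfolded dn_def]]) (use False in simp)
    then show "fst (xs!b) \<le> fst (xs!a)" by simp
  qed
  then show ?thesis unfolding mono_seq_def by blast
qed

lemma geo_mono2:
  assumes g: "geodesic (GV r s) GA xs"
  shows "mono_seq (\<lambda>t. snd (xs!t)) (length xs)"
proof (cases "snd (xs!0) \<le> snd (xs!(length xs - 1))")
  case True
  have "\<forall>a b. a \<le> b \<longrightarrow> b < length xs \<longrightarrow> snd (xs!a) \<le> snd (xs!b)"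
  proof (intro allI impI)
    fix a b assume ab: "a \<le> b" "b < length xs"
    have "int (snd (xs!a)) \<le> int (snd (xs!b))"
      by (rule mono3[OF conjunct2[OF geo_key[OF g ab], unfolded dn_def]]) (use True in simp)
    then show "snd (xs!a) \<le> snd (xs!b)" by simp
  qed
  then show ?thesis unfolding mono_seq_def by blast
next
  case False
  have "\<forall>a b. a \<le> b \<longrightarrow> b < length xs \<longrightarrow> snd (xs!b) \<le> snd (xs!a)"
  proof (intro allI impI)
    fix a b assume ab: "a \<le> b" "b < length xs"
    have "int (snd (xs!b)) \<le> int (snd (xs!a))"
      by (rule mono3'[OF conjunct2[OF geo_key[OF g ab], unfolded dn_def]]) (use False in simp)
    then show "snd (xs!b) \<le> snd (xs!a)" by simp
  qed
  then show ?thesis unfolding mono_seq_def by blast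
qed



lemma mono_cases:
  assumes "mono_seq f n"
  obtains "\<And>a b. a \<le> b \<Longrightarrow> b < n \<Longrightarrow> f a \<le> f b" | "\<And>a b. a \<le> b \<Longrightarrow> b < n \<Longrightarrow> f b \<le> f a"
  using assms unfolding mono_seq_def by blast

lemma G2:
  assumes "mono_seq f n" "i < j" "j + 1 < n" "f i \<noteq> f (i+1)" "f j \<noteq> f (j+1)"
    "f i \<in> {a, a+1}" "f (i+1) \<in> {a, a+1}" "f j \<in> {a, a+1}" "f (j+1) \<in> {a, a+1}"
  shows False
  using assms(1)
proof (cases rule: mono_cases)
  case 1
  from 1[of i "i+1"] 1[of "i+1" j] 1[of j "j+1"] assms(2-9) show False by auto
next
  case 2
  from 2[of i "i+1"] 2[of "i+1" j] 2[of j "j+1"] assms(2-9) show False by auto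
qed

lemma G3:
  assumes "mono_seq f n" "i < j" "j < k" "k + 1 < n" "f i \<noteq> f (i+1)" "f j \<noteq> f (j+1)" "f k \<noteq> f (k+1)"
    "f i \<le> 2" "f (k+1) \<le> 2"
  shows False
  using assms(1)
proof (cases rule: mono_cases)
  case 1
  from 1[of i "i+1"] 1[of "i+1" j] 1[of j "j+1"] 1[of "j+1" k] 1[of k "k+1"] assms(2-9) show False by auto
next
  case 2
  from 2[of i "i+1"] 2[of "i+1" j] 2[of j "j+1"] 2[of "j+1" k] 2[of k "k+1"] assms(2-9) show False by auto
qed

lemma btw:
  assumes "mono_seq f n" "a < b \<and> b < c \<or> c < b \<and> b < a" "a < n" "c < n"
  shows "(f a \<le> f b \<and> f b \<le> f c) \<or> (f c \<le> f b \<and> f b \<le> f a)"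
  using assms(1)
proof (cases rule: mono_cases)
  case 1
  from 1[of a b] 1[of b c] 1[of c b] 1[of b a] assms(2-4) show ?thesis by auto
next
  case 2
  from 2[of a b] 2[of b c] 2[of c b] 2[of b a] assms(2-4) show ?thesis by auto
qed

lemma three_pos:
  fixes a b c n :: nat
  assumes "\<And>i j k. i < j \<Longrightarrow> j < k \<Longrightarrow> k + 1 < n \<Longrightarrow> P i \<Longrightarrow> P j \<Longrightarrow> P k \<Longrightarrow> False"
  and "P a" "P b" "P c" "a \<noteq> b" "a \<noteq> c" "b \<noteq> c" "a+1<n" "b+1<n" "c+1<n"
  shows False
proof -
  have "a < b \<or> b < a" "a < c \<or> c < a" "b < c \<or> c < b" using assms(5-7) by auto
  then show False using assms(1)[of a b c] assms(1)[of a c b] assms(1)[of b a c] assms(1)[of b c a] assms(1)[of c a b] assms(1)[of c b a] assms(2-4,8-10)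
    by (elim disjE; meson order.strict_trans)
qed

lemma we_iff: "e \<in> walk_edges xs \<longleftrightarrow> (\<exists>i. i + 1 < length xs \<and> e = {xs!i, xs!(i+1)})"
  unfolding walk_edges_def by blast

lemma we_finite: "finite (walk_edges xs)"
proof -
  have "walk_edges xs = (\<lambda>i. {xs!i, xs!(i+1)}) ` {i. i + 1 < length xs}"
    unfolding walk_edges_def by blast
  moreover have "finite {i. i + 1 < length xs}" by (rule finite_subset[of _ "{..<length xs}"]) auto
  ultimately show ?thesis by simp
qed

lemma gp_intro:
  assumes "S \<subseteq> graph_edges V adj"
  and "\<And>xs i j k. geodesic V adj xs \<Longrightarrow> i < j \<Longrightarrow> j < k \<Longrightarrow> k + 1 < length xs \<Longrightarrow>
     {xs!i, xs!(i+1)} \<in> S \<Longrightarrow> {xs!j, xs!(j+1)} \<in> S \<Longrightarrow> {xs!k, xs!(k+1)} \<in> S \<Longrightarrow> False"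
  shows "edge_gp_set V adj S"
  unfolding edge_gp_set_def
proof (intro conjI allI impI notI)
  show "S \<subseteq> graph_edges V adj" by (rule assms(1))
  fix xs assume g: "geodesic V adj xs"
  assume "\<exists>e1 e2 e3. e1 \<in> S \<and> e2 \<in> S \<and> e3 \<in> S \<and> e1 \<noteq> e2 \<and> e1 \<noteq> e3 \<and> e2 \<noteq> e3 \<and>
               e1 \<in> walk_edges xs \<and> e2 \<in> walk_edges xs \<and> e3 \<in> walk_edges xs"
  then obtain e1 e2 e3 where e: "e1 \<in> S" "e2 \<in> S" "e3 \<in> S" "e1 \<noteq> e2" "e1 \<noteq> e3" "e2 \<noteq> e3"
    "e1 \<in> walk_edges xs" "e2 \<in> walk_edges xs" "e3 \<in> walk_edges xs" by blast
  obtain a where a: "a + 1 < length xs" "e1 = {xs!a, xs!(a+1)}" using e(7) by (auto simp: we_iff)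
  obtain b where b: "b + 1 < length xs" "e2 = {xs!b, xs!(b+1)}" using e(8) by (auto simp: we_iff)
  obtain c where c: "c + 1 < length xs" "e3 = {xs!c, xs!(c+1)}" using e(9) by (auto simp: we_iff)
  show False
    apply (rule three_pos[where P = "\<lambda>t. {xs!t, xs!(t+1)} \<in> S" and n = "length xs" and a = a and b = b and c = c])
    using assms(2)[OF g] a b c e by auto
qed

lemma card3_ex:
  assumes "finite A" "3 \<le> card A"
  shows "\<exists>a b c. a \<in> A \<and> b \<in> A \<and> c \<in> A \<and> a \<noteq> b \<and> a \<noteq> c \<and> b \<noteq> c"
proof -
  obtain B where "B \<subseteq> A" "card B = 3" using obtain_subset_with_card_n[OF assms(2)] by metis
  then show ?thesis by (auto simp: card_3_iff)
qed

lemma gp_card: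
  assumes "edge_gp_set V adj S" "geodesic V adj xs"
  shows "card (S \<inter> walk_edges xs) \<le> 2"
proof (rule ccontr)
  assume "\<not> ?thesis"
  then have "3 \<le> card (S \<inter> walk_edges xs)" by simp
  from card3_ex[OF _ this] obtain a b c where "a \<in> S \<inter> walk_edges xs" "b \<in> S \<inter> walk_edges xs" "c \<in> S \<inter> walk_edges xs"
     "a \<noteq> b" "a \<noteq> c" "b \<noteq> c" using we_finite by blast
  then show False using assms unfolding edge_gp_set_def by blast
qed

lemma double_count:
  fixes E :: "'k \<Rightarrow> 'e set"
  assumes "finite K" "finite S"
    "\<And>k. k \<in> K \<Longrightarrow> card (S \<inter> E k) \<le> 2"
    "\<And>e. e \<in> S \<Longrightarrow> \<exists>k1\<in>K. \<exists>k2\<in>K. k1 \<noteq> k2 \<and> e \<in> E k1 \<and> e \<in> E k2"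
  shows "card S \<le> card K"
proof -
  have "2 * card S = (\<Sum>e\<in>S. 2::nat)" by simp
  also have "\<dots> \<le> (\<Sum>e\<in>S. card {k\<in>K. e \<in> E k})"
  proof (rule sum_mono)
    fix e assume "e \<in> S"
    then obtain k1 k2 where "k1 \<in> K" "k2 \<in> K" "k1 \<noteq> k2" "e \<in> E k1" "e \<in> E k2" using assms(4) by blast
    then have "{k1, k2} \<subseteq> {k\<in>K. e \<in> E k}" by auto
    from card_mono[OF _ this] have "card {k1,k2} \<le> card {k\<in>K. e \<in> E k}" using assms(1) by simp
    then show "2 \<le> card {k\<in>K. e \<in> E k}" using \<open>k1 \<noteq> k2\<close> by simp
  qed
  also have "\<dots> = (\<Sum>e\<in>S. \<Sum>k\<in>K. if e \<in> E k then 1 else 0)"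
  proof (rule sum.cong)
    fix e show "card {k\<in>K. e \<in> E k} = (\<Sum>k\<in>K. if e \<in> E k then 1 else 0)"
      using sum.inter_filter[OF assms(1), of "\<lambda>_. 1::nat" "\<lambda>k. e \<in> E k"] by simp
  qed simp
  also have "\<dots> = (\<Sum>k\<in>K. \<Sum>e\<in>S. if e \<in> E k then 1 else 0)" by (rule sum.swap)
  also have "\<dots> = (\<Sum>k\<in>K. card (S \<inter> E k))"
  proof (rule sum.cong)
    fix k have "S \<inter> E k = {e\<in>S. e \<in> E k}" by blast
    then show "(\<Sum>e\<in>S. if e \<in> E k then 1 else 0) = card (S \<inter> E k)"
      using sum.inter_filter[OF assms(2), of "\<lambda>_. 1::nat" "\<lambda>e. e \<in> E k"] by simp
  qed simp
  also have "\<dots> \<le> (\<Sum>k\<in>K. 2)" by (rule sum_mono) (rule assms(3))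
  also have "\<dots> = 2 * card K" by simp
  finally show ?thesis by simp
qed

lemma edge_cases:
  assumes "e \<in> graph_edges (GV r s) GA"
  shows "(\<exists>x y. x + 1 < r \<and> y < s \<and> e = {(x,y),(x+1,y)}) \<or> (\<exists>x y. x < r \<and> y + 1 < s \<and> e = {(x,y),(x,y+1)})"
proof -
  obtain u v where uv: "e = {u,v}" "u \<in> GV r s" "v \<in> GV r s" "GA u v"
    using assms unfolding graph_edges_def by blast
  obtain a b c d where ab: "u = (a,b)" "v = (c,d)" by (cases u, cases v) auto
  have e: "e = {(a,b),(c,d)}" using uv ab by simp
  have bd: "a < r" "b < s" "c < r" "d < s" using uv ab unfolding GV_iff by auto
  have "((a+1=c \<or> c+1=a) \<and> b=d) \<or> (a=c \<and> (b+1=d \<or> d+1=b))"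
    using uv ab unfolding cart_adj_def path_adj_def by auto
  then consider "c = a+1" "b = d" | "a = c+1" "b = d" | "a = c" "d = b+1" | "a = c" "b = d+1" by blast
  then show ?thesis
  proof cases
    case 1 then show ?thesis using e bd by (intro disjI1 exI[of _ a] exI[of _ b]) simp
  next
    case 2 then show ?thesis using e bd by (intro disjI1 exI[of _ c] exI[of _ b]) (simp add: insert_commute)
  next
    case 3 then show ?thesis using e bd by (intro disjI2 exI[of _ a] exI[of _ b]) simp
  next
    case 4 then show ?thesis using e bd by (intro disjI2 exI[of _ a] exI[of _ d]) (simp add: insert_commute)
  qed
qed

lemma we_map: "t + 1 < N \<Longrightarrow> {g t, g (t+1)} \<in> walk_edges (map g [0..<N])"
  unfolding we_iff by (rule exI[of _ t]) auto

lemma walk_map: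
  assumes "N > 0" "\<And>t. t < N \<Longrightarrow> g t \<in> V" "\<And>t. t + 1 < N \<Longrightarrow> adj (g t) (g (t+1))"
  shows "walk V adj (map g [0..<N])"
  using assms unfolding walk_def by (auto simp: nth_append)



definition cnef :: "nat \<Rightarrow> nat \<Rightarrow> nat \<Rightarrow> nat \<Rightarrow> nat \<times> nat" where
  "cnef r s i t = (if t \<le> i then (t,0) else if t \<le> i + (s-1) then (i, t-i) else (t-(s-1), s-1))"
definition cnwf :: "nat \<Rightarrow> nat \<Rightarrow> nat \<Rightarrow> nat \<Rightarrow> nat \<times> nat" where
  "cnwf r s i t = (if t \<le> r-1-i then (r-1-t, 0) else if t \<le> (r-1-i) + (s-1) then (i, t-(r-1-i)) else (r+s-2-t, s-1))"
definition rnef :: "nat \<Rightarrow> nat \<Rightarrow> nat \<Rightarrow> nat \<Rightarrow> nat \<times> nat" where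
  "rnef r s j t = (if t \<le> j then (0,t) else if t \<le> j + (r-1) then (t-j, j) else (r-1, t-(r-1)))"
definition rnwf :: "nat \<Rightarrow> nat \<Rightarrow> nat \<Rightarrow> nat \<Rightarrow> nat \<times> nat" where
  "rnwf r s j t = (if t \<le> j then (r-1,t) else if t \<le> j + (r-1) then (r-1-(t-j), j) else (0, t-(r-1)))"


lemma geo_map:
  assumes "N = r + s - 1" "1 \<le> r" "1 \<le> s" "g 0 = p" "g (N - 1) = q"
    "md p q = int (r - 1) + int (s - 1)"
    "\<And>t. t < N \<Longrightarrow> g t \<in> GV r s" "\<And>t. t + 1 < N \<Longrightarrow> GA (g t) (g (t+1))"
  shows "geodesic (GV r s) GA (map g [0..<N])"
proof (rule geo_intro)
  show "walk (GV r s) GA (map g [0..<N])" using assms by (intro walk_map) auto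
  have "N > 0" using assms by simp
  then have "hd (map g [0..<N]) = p" "last (map g [0..<N]) = q" using assms
    by (auto simp: hd_map last_map hd_upt)
  then show "int (length (map g [0..<N])) = md (hd (map g [0..<N])) (last (map g [0..<N])) + 1"
    using assms by simp
qed

context
  fixes r s :: nat
  assumes r1: "1 \<le> r" and s2: "2 \<le> s"
begin

lemma cne_geo: "i < r \<Longrightarrow> geodesic (GV r s) GA (map (cnef r s i) [0..<r+s-1])"
  by (rule geo_map[where p = "(0,0)" and q = "(r-1,s-1)"])
     (use r1 s2 in \<open>auto simp: cnef_def GV_iff md_def dn_def cart_adj_def path_adj_def\<close>)

lemma cnw_geo: "i < r \<Longrightarrow> geodesic (GV r s) GA (map (cnwf r s i) [0..<r+s-1])"
  by (rule geo_map[where p = "(r-1,0)" and q = "(0,s-1)"])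
     (use r1 s2 in \<open>auto simp: cnwf_def GV_iff md_def dn_def cart_adj_def path_adj_def\<close>)

lemma rne_geo: "j < s - 1 \<Longrightarrow> geodesic (GV r s) GA (map (rnef r s j) [0..<r+s-1])"
  by (rule geo_map[where p = "(0,0)" and q = "(r-1,s-1)"])
     (use r1 s2 in \<open>auto simp: rnef_def GV_iff md_def dn_def cart_adj_def path_adj_def\<close>)

lemma rnw_geo: "j < s - 1 \<Longrightarrow> geodesic (GV r s) GA (map (rnwf r s j) [0..<r+s-1])"
  by (rule geo_map[where p = "(r-1,0)" and q = "(0,s-1)"])
     (use r1 s2 in \<open>auto simp: rnwf_def GV_iff md_def dn_def cart_adj_def path_adj_def\<close>)

lemma cne_h0: assumes "i < r" "x < i" shows "{(x,0),(x+1,0)} \<in> walk_edges (map (cnef r s i) [0..<r+s-1])"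
proof -
  have a: "cnef r s i (x) = (x,0)" using assms r1 s2 unfolding cnef_def
    by (simp split: if_split, (intro conjI impI)?, ((simp | arith)+)?)
  have b: "cnef r s i (x+1) = (x+1,0)" using assms r1 s2 unfolding cnef_def
    by (simp split: if_split, (intro conjI impI)?, ((simp | arith)+)?)
  have "{cnef r s i (x), cnef r s i (x+1)} \<in> walk_edges (map (cnef r s i) [0..<r+s-1])"
    by (rule we_map) (use assms r1 s2 in arith)
  then show ?thesis unfolding a b .
qed

lemma cne_v: assumes "i < r" "y + 1 < s" shows "{(i,y),(i,y+1)} \<in> walk_edges (map (cnef r s i) [0..<r+s-1])"
proof -
  have a: "cnef r s i (i+y) = (i,y)" using assms r1 s2 unfolding cnef_def
    by (simp split: if_split, (intro conjI impI)?, ((simp | arith)+)?)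
  have b: "cnef r s i (i+y+1) = (i,y+1)" using assms r1 s2 unfolding cnef_def
    by (simp split: if_split, (intro conjI impI)?, ((simp | arith)+)?)
  have "{cnef r s i (i+y), cnef r s i (i+y+1)} \<in> walk_edges (map (cnef r s i) [0..<r+s-1])"
    by (rule we_map) (use assms r1 s2 in arith)
  then show ?thesis unfolding a b .
qed

lemma cne_ht: assumes "i < r" "i \<le> x" "x + 1 < r" shows "{(x,s-1),(x+1,s-1)} \<in> walk_edges (map (cnef r s i) [0..<r+s-1])"
proof -
  have a: "cnef r s i (x+s-1) = (x,s-1)" using assms r1 s2 unfolding cnef_def
    by (simp split: if_split, (intro conjI impI)?, ((simp | arith)+)?)
  have b: "cnef r s i (x+s-1+1) = (x+1,s-1)" using assms r1 s2 unfolding cnef_def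
    by (simp split: if_split, (intro conjI impI)?, ((simp | arith)+)?)
  have "{cnef r s i (x+s-1), cnef r s i (x+s-1+1)} \<in> walk_edges (map (cnef r s i) [0..<r+s-1])"
    by (rule we_map) (use assms r1 s2 in arith)
  then show ?thesis unfolding a b .
qed

lemma cnw_h0: assumes "i < r" "i \<le> x" "x + 1 < r" shows "{(x,0),(x+1,0)} \<in> walk_edges (map (cnwf r s i) [0..<r+s-1])"
proof -
  have a: "cnwf r s i (r-2-x) = (x+1,0)" using assms r1 s2 unfolding cnwf_def
    by (simp split: if_split, (intro conjI impI)?, ((simp | arith)+)?)
  have b: "cnwf r s i (r-2-x+1) = (x,0)" using assms r1 s2 unfolding cnwf_def
    by (simp split: if_split, (intro conjI impI)?, ((simp | arith)+)?)
  have "{cnwf r s i (r-2-x), cnwf r s i (r-2-x+1)} \<in> walk_edges (map (cnwf r s i) [0..<r+s-1])"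
    by (rule we_map) (use assms r1 s2 in arith)
  then show ?thesis unfolding a b by (simp add: insert_commute)
qed

lemma cnw_v: assumes "i < r" "y + 1 < s" shows "{(i,y),(i,y+1)} \<in> walk_edges (map (cnwf r s i) [0..<r+s-1])"
proof -
  have a: "cnwf r s i (r-1-i+y) = (i,y)" using assms r1 s2 unfolding cnwf_def
    by (simp split: if_split, (intro conjI impI)?, ((simp | arith)+)?)
  have b: "cnwf r s i (r-1-i+y+1) = (i,y+1)" using assms r1 s2 unfolding cnwf_def
    by (simp split: if_split, (intro conjI impI)?, ((simp | arith)+)?)
  have "{cnwf r s i (r-1-i+y), cnwf r s i (r-1-i+y+1)} \<in> walk_edges (map (cnwf r s i) [0..<r+s-1])"
    by (rule we_map) (use assms r1 s2 in arith)
  then show ?thesis unfolding a b .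
qed

lemma cnw_ht: assumes "i < r" "x < i" shows "{(x,s-1),(x+1,s-1)} \<in> walk_edges (map (cnwf r s i) [0..<r+s-1])"
proof -
  have a: "cnwf r s i (r+s-3-x) = (x+1,s-1)" using assms r1 s2 unfolding cnwf_def
    by (simp split: if_split, (intro conjI impI)?, ((simp | arith)+)?)
  have b: "cnwf r s i (r+s-3-x+1) = (x,s-1)" using assms r1 s2 unfolding cnwf_def
    by (simp split: if_split, (intro conjI impI)?, ((simp | arith)+)?)
  have "{cnwf r s i (r+s-3-x), cnwf r s i (r+s-3-x+1)} \<in> walk_edges (map (cnwf r s i) [0..<r+s-1])"
    by (rule we_map) (use assms r1 s2 in arith)
  then show ?thesis unfolding a b by (simp add: insert_commute)
qed

lemma rne_v0: assumes "j < s - 1" "y < j" shows "{(0,y),(0,y+1)} \<in> walk_edges (map (rnef r s j) [0..<r+s-1])"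
proof -
  have a: "rnef r s j (y) = (0,y)" using assms r1 s2 unfolding rnef_def
    by (simp split: if_split, (intro conjI impI)?, ((simp | arith)+)?)
  have b: "rnef r s j (y+1) = (0,y+1)" using assms r1 s2 unfolding rnef_def
    by (simp split: if_split, (intro conjI impI)?, ((simp | arith)+)?)
  have "{rnef r s j (y), rnef r s j (y+1)} \<in> walk_edges (map (rnef r s j) [0..<r+s-1])"
    by (rule we_map) (use assms r1 s2 in arith)
  then show ?thesis unfolding a b .
qed

lemma rne_h: assumes "j < s - 1" "x + 1 < r" shows "{(x,j),(x+1,j)} \<in> walk_edges (map (rnef r s j) [0..<r+s-1])"
proof -
  have a: "rnef r s j (j+x) = (x,j)" using assms r1 s2 unfolding rnef_def
    by (simp split: if_split, (intro conjI impI)?, ((simp | arith)+)?)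
  have b: "rnef r s j (j+x+1) = (x+1,j)" using assms r1 s2 unfolding rnef_def
    by (simp split: if_split, (intro conjI impI)?, ((simp | arith)+)?)
  have "{rnef r s j (j+x), rnef r s j (j+x+1)} \<in> walk_edges (map (rnef r s j) [0..<r+s-1])"
    by (rule we_map) (use assms r1 s2 in arith)
  then show ?thesis unfolding a b .
qed

lemma rne_vr: assumes "j < s - 1" "j \<le> y" "y + 1 < s" shows "{(r-1,y),(r-1,y+1)} \<in> walk_edges (map (rnef r s j) [0..<r+s-1])"
proof -
  have a: "rnef r s j (y+r-1) = (r-1,y)" using assms r1 s2 unfolding rnef_def
    by (simp split: if_split, (intro conjI impI)?, ((simp | arith)+)?)
  have b: "rnef r s j (y+r-1+1) = (r-1,y+1)" using assms r1 s2 unfolding rnef_def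
    by (simp split: if_split, (intro conjI impI)?, ((simp | arith)+)?)
  have "{rnef r s j (y+r-1), rnef r s j (y+r-1+1)} \<in> walk_edges (map (rnef r s j) [0..<r+s-1])"
    by (rule we_map) (use assms r1 s2 in arith)
  then show ?thesis unfolding a b .
qed

lemma rnw_vr: assumes "j < s - 1" "y < j" shows "{(r-1,y),(r-1,y+1)} \<in> walk_edges (map (rnwf r s j) [0..<r+s-1])"
proof -
  have a: "rnwf r s j (y) = (r-1,y)" using assms r1 s2 unfolding rnwf_def
    by (simp split: if_split, (intro conjI impI)?, ((simp | arith)+)?)
  have b: "rnwf r s j (y+1) = (r-1,y+1)" using assms r1 s2 unfolding rnwf_def
    by (simp split: if_split, (intro conjI impI)?, ((simp | arith)+)?)
  have "{rnwf r s j (y), rnwf r s j (y+1)} \<in> walk_edges (map (rnwf r s j) [0..<r+s-1])"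
    by (rule we_map) (use assms r1 s2 in arith)
  then show ?thesis unfolding a b .
qed

lemma rnw_h: assumes "j < s - 1" "x + 1 < r" shows "{(x,j),(x+1,j)} \<in> walk_edges (map (rnwf r s j) [0..<r+s-1])"
proof -
  have a: "rnwf r s j (j+r-2-x) = (x+1,j)" using assms r1 s2 unfolding rnwf_def
    by (simp split: if_split, (intro conjI impI)?, ((simp | arith)+)?)
  have b: "rnwf r s j (j+r-2-x+1) = (x,j)" using assms r1 s2 unfolding rnwf_def
    by (simp split: if_split, (intro conjI impI)?, ((simp | arith)+)?)
  have "{rnwf r s j (j+r-2-x), rnwf r s j (j+r-2-x+1)} \<in> walk_edges (map (rnwf r s j) [0..<r+s-1])"
    by (rule we_map) (use assms r1 s2 in arith)
  then show ?thesis unfolding a b by (simp add: insert_commute)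
qed

lemma rnw_v0: assumes "j < s - 1" "j \<le> y" "y + 1 < s" shows "{(0,y),(0,y+1)} \<in> walk_edges (map (rnwf r s j) [0..<r+s-1])"
proof -
  have a: "rnwf r s j (y+r-1) = (0,y)" using assms r1 s2 unfolding rnwf_def
    by (simp split: if_split, (intro conjI impI)?, ((simp | arith)+)?)
  have b: "rnwf r s j (y+r-1+1) = (0,y+1)" using assms r1 s2 unfolding rnwf_def
    by (simp split: if_split, (intro conjI impI)?, ((simp | arith)+)?)
  have "{rnwf r s j (y+r-1), rnwf r s j (y+r-1+1)} \<in> walk_edges (map (rnwf r s j) [0..<r+s-1])"
    by (rule we_map) (use assms r1 s2 in arith)
  then show ?thesis unfolding a b .
qed

end



lemma strict_pos:
  assumes "mono_seq f n" "a < n" "b < n" "c < n" "f a < f b" "f b < f c"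
  shows "(a < b \<and> b < c) \<or> (c < b \<and> b < a)"
  using assms(1)
proof (cases rule: mono_cases)
  case 1
  have "\<not> b \<le> a" using 1[of b a] assms by auto
  moreover have "\<not> c \<le> b" using 1[of c b] assms by auto
  ultimately show ?thesis by auto
next
  case 2
  have "\<not> a \<le> b" using 2[of a b] assms by auto
  moreover have "\<not> b \<le> c" using 2[of b c] assms by auto
  ultimately show ?thesis by auto
qed

lemma cross:
  fixes X Y :: "nat \<Rightarrow> nat"
  assumes mX: "mono_seq X n" and mY: "mono_seq Y n" and pn: "p < n" "q < n" "w < n"
  and hp: "X p = 0" "0 < Y p" "Y p < s - 1"
  and hq: "X q = r - 1" "0 < Y q" "Y q < s - 1"
  and hw: "Y w = 0" "0 < X w" "X w < r - 1"
  shows False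
proof -
  have "(p < w \<and> w < q) \<or> (q < w \<and> w < p)" using strict_pos[OF mX pn(1) pn(3) pn(2)] hp hq hw by auto
  from btw[OF mY this] pn hp hq hw show False by auto
qed

lemma cross2:
  fixes X Y :: "nat \<Rightarrow> nat"
  assumes mX: "mono_seq X n" and mY: "mono_seq Y n" and pn: "p < n" "q < n" "w < n"
  and hp: "X p = 0" "0 < Y p" "Y p < s - 1"
  and hq: "X q = r - 1" "0 < Y q" "Y q < s - 1"
  and hw: "Y w = s - 1" "0 < X w" "X w < r - 1"
  shows False
proof -
  have "(p < w \<and> w < q) \<or> (q < w \<and> w < p)" using strict_pos[OF mX pn(1) pn(3) pn(2)] hp hq hw by auto
  from btw[OF mY this] pn hp hq hw show False by auto
qed

definition isL :: "nat \<Rightarrow> nat \<Rightarrow> (nat \<times> nat) list \<Rightarrow> nat \<Rightarrow> bool" where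
  "isL r s xs t \<longleftrightarrow> fst (xs!t) \<in> {0, 0+1} \<and> fst (xs!(t+1)) \<in> {0, 0+1} \<and> fst (xs!t) \<noteq> fst (xs!(t+1))
     \<and> snd (xs!t) = snd (xs!(t+1)) \<and> 0 < snd (xs!t) \<and> snd (xs!t) < s - 1"
definition isR :: "nat \<Rightarrow> nat \<Rightarrow> (nat \<times> nat) list \<Rightarrow> nat \<Rightarrow> bool" where
  "isR r s xs t \<longleftrightarrow> fst (xs!t) \<in> {r-2, r-2+1} \<and> fst (xs!(t+1)) \<in> {r-2, r-2+1} \<and> fst (xs!t) \<noteq> fst (xs!(t+1))
     \<and> snd (xs!t) = snd (xs!(t+1)) \<and> 0 < snd (xs!t) \<and> snd (xs!t) < s - 1"
definition isB :: "nat \<Rightarrow> nat \<Rightarrow> (nat \<times> nat) list \<Rightarrow> nat \<Rightarrow> bool" where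
  "isB r s xs t \<longleftrightarrow> snd (xs!t) \<in> {0, 0+1} \<and> snd (xs!(t+1)) \<in> {0, 0+1} \<and> snd (xs!t) \<noteq> snd (xs!(t+1))
     \<and> fst (xs!t) = fst (xs!(t+1)) \<and> 0 < fst (xs!t) \<and> fst (xs!t) < r - 1"
definition isT :: "nat \<Rightarrow> nat \<Rightarrow> (nat \<times> nat) list \<Rightarrow> nat \<Rightarrow> bool" where
  "isT r s xs t \<longleftrightarrow> snd (xs!t) \<in> {s-2, s-2+1} \<and> snd (xs!(t+1)) \<in> {s-2, s-2+1} \<and> snd (xs!t) \<noteq> snd (xs!(t+1))
     \<and> fst (xs!t) = fst (xs!(t+1)) \<and> 0 < fst (xs!t) \<and> fst (xs!t) < r - 1"

definition S4 :: "nat \<Rightarrow> nat \<Rightarrow> (nat \<times> nat) set set" where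
  "S4 r s = (\<lambda>j. {(0,j),(1,j)}) ` {1..<s-1} \<union> (\<lambda>j. {(r-2,j),(r-1,j)}) ` {1..<s-1}
          \<union> (\<lambda>i. {(i,0),(i,1)}) ` {1..<r-1} \<union> (\<lambda>i. {(i,s-2),(i,s-1)}) ` {1..<r-1}"

context
  fixes r s :: nat
  assumes r4: "4 \<le> r" and s4: "4 \<le> s"
begin

lemma ptsE:
  assumes "{a, b} = {p, q}"
  obtains "a = p" "b = q" | "a = q" "b = p"
  using assms by (auto simp: doubleton_eq_iff)

lemma step_type:
  assumes "{xs!t, xs!(t+1)} \<in> S4 r s"
  shows "isL r s xs t \<or> isR r s xs t \<or> isB r s xs t \<or> isT r s xs t"
proof -
  have r2: "r - 2 + 1 = r - 1" "s - 2 + 1 = s - 1" using r4 s4 by auto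
  from assms consider
      j where "1 \<le> j" "j < s - 1" "{xs!t, xs!(t+1)} = {(0,j),(1,j)}"
    | j where "1 \<le> j" "j < s - 1" "{xs!t, xs!(t+1)} = {(r-2,j),(r-1,j)}"
    | i where "1 \<le> i" "i < r - 1" "{xs!t, xs!(t+1)} = {(i,0),(i,1)}"
    | i where "1 \<le> i" "i < r - 1" "{xs!t, xs!(t+1)} = {(i,s-2),(i,s-1)}"
    unfolding S4_def by fastforce
  then show ?thesis
  proof cases
    case 1 then show ?thesis by (elim ptsE) (auto simp: isL_def)
  next
    case 2 then show ?thesis using r4 by (elim ptsE) (auto simp: isR_def r2)
  next
    case 3 then show ?thesis by (elim ptsE) (auto simp: isB_def)
  next
    case 4 then show ?thesis using s4 by (elim ptsE) (auto simp: isT_def r2)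
  qed
qed

end

lemma ge_h: "x + 1 < r \<Longrightarrow> y < s \<Longrightarrow> {(x,y),(x+1,y)} \<in> graph_edges (GV r s) GA"
  unfolding graph_edges_def by (rule CollectI, rule exI[of _ "(x,y)"], rule exI[of _ "(x+1,y)"]) (auto simp: GV_iff cart_adj_def path_adj_def)

lemma ge_v: "x < r \<Longrightarrow> y + 1 < s \<Longrightarrow> {(x,y),(x,y+1)} \<in> graph_edges (GV r s) GA"
  unfolding graph_edges_def by (rule CollectI, rule exI[of _ "(x,y)"], rule exI[of _ "(x,y+1)"]) (auto simp: GV_iff cart_adj_def path_adj_def)

lemma S4_sub: "(4::nat) \<le> r \<Longrightarrow> 4 \<le> s \<Longrightarrow> S4 r s \<subseteq> graph_edges (GV r s) GA"
proof -
  assume r4: "4 \<le> r" and s4: "4 \<le> s"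
  have r2: "r - 1 = r - 2 + 1" "s - 1 = s - 2 + 1" using r4 s4 by auto
  show ?thesis unfolding S4_def
  proof (intro Un_least subsetI)
    fix e :: "(nat \<times> nat) set" assume "e \<in> (\<lambda>j. {(0,j),(1,j)}) ` {1..<s-1}"
    then show "e \<in> graph_edges (GV r s) GA" using ge_h[of 0 r] r4 by auto
  next
    fix e :: "(nat \<times> nat) set" assume "e \<in> (\<lambda>j. {(r-2,j),(r-1,j)}) ` {1..<s-1}"
    then show "e \<in> graph_edges (GV r s) GA" using ge_h[of "r-2" r] r4 unfolding r2 by auto
  next
    fix e :: "(nat \<times> nat) set" assume "e \<in> (\<lambda>i. {(i,0),(i,1)}) ` {1..<r-1}"
    then show "e \<in> graph_edges (GV r s) GA" using ge_v[of _ r 0 s] s4 by auto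
  next
    fix e :: "(nat \<times> nat) set" assume "e \<in> (\<lambda>i. {(i,s-2),(i,s-1)}) ` {1..<r-1}"
    then show "e \<in> graph_edges (GV r s) GA" using ge_v[of _ r "s-2" s] s4 unfolding r2 by auto
  qed
qed

lemma L_pt: "isL r s xs a \<Longrightarrow> \<exists>p. (p = a \<or> p = a+1) \<and> fst (xs!p) = 0 \<and> 0 < snd (xs!p) \<and> snd (xs!p) < s - 1"
  unfolding isL_def
  by (cases "fst (xs!a) = 0") ((rule exI[of _ a]; simp), (rule exI[of _ "a+1"]; auto))
lemma R_pt: "2 \<le> r \<Longrightarrow> isR r s xs a \<Longrightarrow> \<exists>p. (p = a \<or> p = a+1) \<and> fst (xs!p) = r - 1 \<and> 0 < snd (xs!p) \<and> snd (xs!p) < s - 1"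
  unfolding isR_def
  by (cases "fst (xs!a) = r - 1") ((rule exI[of _ a]; simp), (rule exI[of _ "a+1"]; auto))
lemma B_pt: "isB r s xs a \<Longrightarrow> \<exists>p. (p = a \<or> p = a+1) \<and> snd (xs!p) = 0 \<and> 0 < fst (xs!p) \<and> fst (xs!p) < r - 1"
  unfolding isB_def
  by (cases "snd (xs!a) = 0") ((rule exI[of _ a]; simp), (rule exI[of _ "a+1"]; auto))
lemma T_pt: "2 \<le> s \<Longrightarrow> isT r s xs a \<Longrightarrow> \<exists>p. (p = a \<or> p = a+1) \<and> snd (xs!p) = s - 1 \<and> 0 < fst (xs!p) \<and> fst (xs!p) < r - 1"
  unfolding isT_def
  by (cases "snd (xs!a) = s - 1") ((rule exI[of _ a]; simp), (rule exI[of _ "a+1"]; auto))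

lemma S4_gp:
  assumes r4: "4 \<le> r" and s4: "4 \<le> s"
  shows "edge_gp_set (GV r s) GA (S4 r s)"
proof (rule gp_intro[OF S4_sub[OF r4 s4]])
  fix xs i j k
  assume g: "geodesic (GV r s) GA xs" and ijk: "i < j" "j < k" "k + 1 < length xs"
    and si: "{xs!i, xs!(i+1)} \<in> S4 r s" and sj: "{xs!j, xs!(j+1)} \<in> S4 r s" and sk: "{xs!k, xs!(k+1)} \<in> S4 r s"
  let ?n = "length xs"
  have r2: "2 \<le> r" and s2: "2 \<le> s" using r4 s4 by auto
  have mX: "mono_seq (\<lambda>t. fst (xs!t)) ?n" by (rule geo_mono1[OF g])
  have mY: "mono_seq (\<lambda>t. snd (xs!t)) ?n" by (rule geo_mono2[OF g])
  have sL: False if "a < b" "b + 1 < ?n" "isL r s xs a" "isL r s xs b" for a b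
    by (rule G2[OF mX, of a b 0]) (use that in \<open>simp_all add: isL_def\<close>)
  have sR: False if "a < b" "b + 1 < ?n" "isR r s xs a" "isR r s xs b" for a b
    by (rule G2[OF mX, of a b "r-2"]) (use that in \<open>simp_all add: isR_def\<close>)
  have sB: False if "a < b" "b + 1 < ?n" "isB r s xs a" "isB r s xs b" for a b
    by (rule G2[OF mY, of a b 0]) (use that in \<open>simp_all add: isB_def\<close>)
  have sT: False if "a < b" "b + 1 < ?n" "isT r s xs a" "isT r s xs b" for a b
    by (rule G2[OF mY, of a b "s-2"]) (use that in \<open>simp_all add: isT_def\<close>)
  have cLRB: False if h: "a + 1 < ?n" "b + 1 < ?n" "c + 1 < ?n" "isL r s xs a" "isR r s xs b" "isB r s xs c" for a b c
  proof -
    obtain p where p: "p = a \<or> p = a+1" "fst (xs!p) = 0" "0 < snd (xs!p)" "snd (xs!p) < s - 1" using L_pt[OF h(4)] by blast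
    obtain q where q: "q = b \<or> q = b+1" "fst (xs!q) = r - 1" "0 < snd (xs!q)" "snd (xs!q) < s - 1" using R_pt[OF r2 h(5)] by blast
    obtain w where w: "w = c \<or> w = c+1" "snd (xs!w) = 0" "0 < fst (xs!w)" "fst (xs!w) < r - 1" using B_pt[OF h(6)] by blast
    show False by (rule cross[OF mX mY, of p q w s r]) (use p q w h in auto)
  qed
  have cLRT: False if h: "a + 1 < ?n" "b + 1 < ?n" "c + 1 < ?n" "isL r s xs a" "isR r s xs b" "isT r s xs c" for a b c
  proof -
    obtain p where p: "p = a \<or> p = a+1" "fst (xs!p) = 0" "0 < snd (xs!p)" "snd (xs!p) < s - 1" using L_pt[OF h(4)] by blast
    obtain q where q: "q = b \<or> q = b+1" "fst (xs!q) = r - 1" "0 < snd (xs!q)" "snd (xs!q) < s - 1" using R_pt[OF r2 h(5)] by blast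
    obtain w where w: "w = c \<or> w = c+1" "snd (xs!w) = s - 1" "0 < fst (xs!w)" "fst (xs!w) < r - 1" using T_pt[OF s2 h(6)] by blast
    show False by (rule cross2[OF mX mY, of p q w s r]) (use p q w h in auto)
  qed
  have cLBT: False if h: "a + 1 < ?n" "b + 1 < ?n" "c + 1 < ?n" "isL r s xs a" "isB r s xs b" "isT r s xs c" for a b c
  proof -
    obtain p where p: "p = a \<or> p = a+1" "fst (xs!p) = 0" "0 < snd (xs!p)" "snd (xs!p) < s - 1" using L_pt[OF h(4)] by blast
    obtain w where w: "w = b \<or> w = b+1" "snd (xs!w) = 0" "0 < fst (xs!w)" "fst (xs!w) < r - 1" using B_pt[OF h(5)] by blast
    obtain q where q: "q = c \<or> q = c+1" "snd (xs!q) = s - 1" "0 < fst (xs!q)" "fst (xs!q) < r - 1" using T_pt[OF s2 h(6)] by blast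
    show False by (rule cross[OF mY mX, of w q p r s]) (use p q w h in auto)
  qed
  have cRBT: False if h: "a + 1 < ?n" "b + 1 < ?n" "c + 1 < ?n" "isR r s xs a" "isB r s xs b" "isT r s xs c" for a b c
  proof -
    obtain p where p: "p = a \<or> p = a+1" "fst (xs!p) = r - 1" "0 < snd (xs!p)" "snd (xs!p) < s - 1" using R_pt[OF r2 h(4)] by blast
    obtain w where w: "w = b \<or> w = b+1" "snd (xs!w) = 0" "0 < fst (xs!w)" "fst (xs!w) < r - 1" using B_pt[OF h(5)] by blast
    obtain q where q: "q = c \<or> q = c+1" "snd (xs!q) = s - 1" "0 < fst (xs!q)" "fst (xs!q) < r - 1" using T_pt[OF s2 h(6)] by blast
    show False by (rule cross2[OF mY mX, of w q p r s]) (use p q w h in auto)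
  qed
  have ti: "isL r s xs i \<or> isR r s xs i \<or> isB r s xs i \<or> isT r s xs i" by (rule step_type[OF r4 s4 si])
  have tj: "isL r s xs j \<or> isR r s xs j \<or> isB r s xs j \<or> isT r s xs j" by (rule step_type[OF r4 s4 sj])
  have tk: "isL r s xs k \<or> isR r s xs k \<or> isB r s xs k \<or> isT r s xs k" by (rule step_type[OF r4 s4 sk])
  have n: "i + 1 < ?n" "j + 1 < ?n" "i < k" using ijk by auto
  note facts = sL sR sB sT cLRB cLRT cLBT cRBT ijk n
  from ti tj tk show False
    by (elim disjE) (blast intro: facts)+
qed



lemma S4_card:
  assumes r4: "4 \<le> r" and s4: "4 \<le> s"
  shows "card (S4 r s) = 2 * r + 2 * s - 8"
proof -
  let ?L = "(\<lambda>j. {(0::nat,j),(1::nat,j)}) ` {1..<s-1}"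
  let ?R = "(\<lambda>j. {(r-2,j),(r-1,j)}) ` {1..<s-1}"
  let ?B = "(\<lambda>i. {(i,0::nat),(i,1::nat)}) ` {1..<r-1}"
  let ?T = "(\<lambda>i. {(i,s-2),(i,s-1)}) ` {1..<r-1}"
  have cL: "card ?L = s - 2" by (subst card_image) (auto simp: inj_on_def doubleton_eq_iff)
  have cR: "card ?R = s - 2" by (subst card_image) (auto simp: inj_on_def doubleton_eq_iff)
  have cB: "card ?B = r - 2" by (subst card_image) (auto simp: inj_on_def doubleton_eq_iff)
  have cT: "card ?T = r - 2" by (subst card_image) (auto simp: inj_on_def doubleton_eq_iff)
  have n1: "{(0,j),(1,j)} \<noteq> {(r-2,j'),(r-1,j')}" for j j' :: nat
  proof
    assume eq: "{(0,j),(1,j)} = {(r-2,j'),(r-1,j')}"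
    have "(0,j) \<in> ({(0,j),(1,j)} :: (nat \<times> nat) set)" by simp
    then have "(0,j) \<in> {(r-2,j'),(r-1,j')}" unfolding eq .
    then show False using r4 by auto
  qed
  have n2: "{(0,j),(1,j)} \<noteq> {(i,0),(i,1)}" if "1 \<le> i" for i j :: nat
  proof
    assume eq: "{(0,j),(1,j)} = {(i,0),(i,1)}"
    have "(0,j) \<in> ({(0,j),(1,j)} :: (nat \<times> nat) set)" by simp
    then have "(0,j) \<in> {(i,0),(i,1)}" unfolding eq .
    then show False using that by auto
  qed
  have n3: "{(0,j),(1,j)} \<noteq> {(i,s-2),(i,s-1)}" if "1 \<le> i" for i j :: nat
  proof
    assume eq: "{(0,j),(1,j)} = {(i,s-2),(i,s-1)}"
    have "(0,j) \<in> ({(0,j),(1,j)} :: (nat \<times> nat) set)" by simp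
    then have "(0,j) \<in> {(i,s-2),(i,s-1)}" unfolding eq .
    then show False using that by auto
  qed
  have n4: "{(r-2,j),(r-1,j)} \<noteq> {(i,0),(i,1)}" if "i < r - 1" for i j :: nat
  proof
    assume eq: "{(r-2,j),(r-1,j)} = {(i,0),(i,1)}"
    have "(r-1,j) \<in> ({(r-2,j),(r-1,j)} :: (nat \<times> nat) set)" by simp
    then have "(r-1,j) \<in> {(i,0),(i,1)}" unfolding eq .
    then show False using that by auto
  qed
  have n5: "{(r-2,j),(r-1,j)} \<noteq> {(i,s-2),(i,s-1)}" if "i < r - 1" for i j :: nat
  proof
    assume eq: "{(r-2,j),(r-1,j)} = {(i,s-2),(i,s-1)}"
    have "(r-1,j) \<in> ({(r-2,j),(r-1,j)} :: (nat \<times> nat) set)" by simp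
    then have "(r-1,j) \<in> {(i,s-2),(i,s-1)}" unfolding eq .
    then show False using that by auto
  qed
  have n6: "{(i,0),(i,1)} \<noteq> {(i',s-2),(i',s-1)}" for i i' :: nat
  proof
    assume eq: "{(i,0),(i,1)} = {(i',s-2),(i',s-1)}"
    have "(i,0) \<in> ({(i,0),(i,1)} :: (nat \<times> nat) set)" by simp
    then have "(i,0) \<in> {(i',s-2),(i',s-1)}" unfolding eq .
    then show False using s4 by auto
  qed
  have d1: "?L \<inter> ?R = {}"
  proof (rule equals0I)
    fix e assume "e \<in> ?L \<inter> ?R"
    then have eL: "e \<in> ?L" and eR: "e \<in> ?R" by auto
    from eL obtain j where j: "e = {(0,j),(1,j)}" by auto
    from eR obtain j' where j': "e = {(r-2,j'),(r-1,j')}" by auto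
    show False using n1[of j j'] j j' by simp
  qed
  have d2: "(?L \<union> ?R) \<inter> ?B = {}"
  proof (rule equals0I)
    fix e assume "e \<in> (?L \<union> ?R) \<inter> ?B"
    then have eB: "e \<in> ?B" and eLR: "e \<in> ?L \<or> e \<in> ?R" by auto
    from eB obtain i where i: "1 \<le> i" "i < r - 1" "e = {(i,0),(i,1)}" by auto
    from eLR show False
    proof
      assume "e \<in> ?L" then obtain j where "e = {(0,j),(1,j)}" by auto
      then show False using n2[OF i(1), of j] i(3) by simp
    next
      assume "e \<in> ?R" then obtain j where "e = {(r-2,j),(r-1,j)}" by auto
      then show False using n4[OF i(2), of j] i(3) by simp
    qed
  qed
  have d3: "(?L \<union> ?R \<union> ?B) \<inter> ?T = {}"
  proof (rule equals0I)
    fix e assume "e \<in> (?L \<union> ?R \<union> ?B) \<inter> ?T"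
    then have eT: "e \<in> ?T" and eLR: "e \<in> ?L \<or> e \<in> ?R \<or> e \<in> ?B" by auto
    from eT obtain i where i: "1 \<le> i" "i < r - 1" "e = {(i,s-2),(i,s-1)}" by auto
    from eLR show False
    proof (elim disjE)
      assume "e \<in> ?L" then obtain j where "e = {(0,j),(1,j)}" by auto
      then show False using n3[OF i(1), of j] i(3) by simp
    next
      assume "e \<in> ?R" then obtain j where "e = {(r-2,j),(r-1,j)}" by auto
      then show False using n5[OF i(2), of j] i(3) by simp
    next
      assume "e \<in> ?B" then obtain j where "e = {(j,0),(j,1)}" by auto
      then show False using n6[of j i] i(3) by simp
    qed
  qed
  have "card (S4 r s) = card (?L \<union> ?R \<union> ?B \<union> ?T)" unfolding S4_def by simp
  also have "\<dots> = card ?L + card ?R + card ?B + card ?T"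
    using d1 d2 d3 by (simp add: card_Un_disjoint)
  finally have "card (S4 r s) = card ?L + card ?R + card ?B + card ?T" .
  then show ?thesis using cL cR cB cT r4 s4 by linarith
qed

definition S2 :: "nat \<Rightarrow> (nat \<times> nat) set set" where
  "S2 r = (\<lambda>k. {(k,0),(k,1)}) ` {0..<r} \<union> {{(0,0),(1,0)}, {(0,1),(1,1)}}"

lemma S2_card: "2 \<le> r \<Longrightarrow> card (S2 r) = r + 2"
proof -
  assume r: "2 \<le> r"
  let ?V = "(\<lambda>k. {(k,0::nat),(k,1::nat)}) ` {0..<r}"
  have cV: "card ?V = r" by (subst card_image) (auto simp: inj_on_def doubleton_eq_iff)
  have d: "?V \<inter> {{(0,0),(1,0)}, {(0,1),(1,1)}} = {}"
  proof (rule equals0I)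
    fix e assume "e \<in> ?V \<inter> {{(0,0),(1,0)}, {(0,1),(1,1)}}"
    then obtain k where ek: "e = {(k,0),(k,1)}" and e2: "e = {(0,0),(1,0)} \<or> e = {(0,1),(1,1)}" by blast
    have "(k,1) \<in> e" "(k,0) \<in> e" using ek by auto
    then show False using e2 by auto
  qed
  have c2: "card {{(0::nat,0::nat),(1,0)}, {(0,1),(1,1)}} = 2" by (simp add: doubleton_eq_iff)
  show ?thesis unfolding S2_def using card_Un_disjoint[OF _ _ d] cV c2 by simp
qed

lemma S2_gp:
  assumes r: "2 \<le> r"
  shows "edge_gp_set (GV r 2) GA (S2 r)"
proof (rule gp_intro)
  show "S2 r \<subseteq> graph_edges (GV r 2) GA"
    unfolding S2_def using ge_v[of _ r 0 2] ge_h[of 0 r 0 2] ge_h[of 0 r 1 2] r by auto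
next
  fix xs i j k
  assume g: "geodesic (GV r 2) GA xs" and ijk: "i < j" "j < k" "k + 1 < length xs"
    and si: "{xs!i, xs!(i+1)} \<in> S2 r" and sj: "{xs!j, xs!(j+1)} \<in> S2 r" and sk: "{xs!k, xs!(k+1)} \<in> S2 r"
  let ?n = "length xs"
  have mX: "mono_seq (\<lambda>t. fst (xs!t)) ?n" by (rule geo_mono1[OF g])
  have mY: "mono_seq (\<lambda>t. snd (xs!t)) ?n" by (rule geo_mono2[OF g])
  define C1 where "C1 t \<longleftrightarrow> snd (xs!t) \<in> {0,0+1} \<and> snd (xs!(t+1)) \<in> {0,0+1} \<and> snd (xs!t) \<noteq> snd (xs!(t+1))" for t
  define C2 where "C2 t \<longleftrightarrow> fst (xs!t) \<in> {0,0+1} \<and> fst (xs!(t+1)) \<in> {0,0+1} \<and> fst (xs!t) \<noteq> fst (xs!(t+1))" for t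
  have ty: "C1 t \<or> C2 t" if "{xs!t, xs!(t+1)} \<in> S2 r" for t
  proof -
    from that consider kk where "{xs!t, xs!(t+1)} = {(kk,0),(kk,1)}" | "{xs!t, xs!(t+1)} = {(0,0),(1,0)}"
      | "{xs!t, xs!(t+1)} = {(0,1),(1,1)}" unfolding S2_def by blast
    then show ?thesis by cases (auto simp: C1_def C2_def doubleton_eq_iff)
  qed
  have s1: False if "a < b" "b + 1 < ?n" "C1 a" "C1 b" for a b
    by (rule G2[OF mY, of a b 0]) (use that in \<open>simp_all add: C1_def\<close>)
  have s2: False if "a < b" "b + 1 < ?n" "C2 a" "C2 b" for a b
    by (rule G2[OF mX, of a b 0]) (use that in \<open>simp_all add: C2_def\<close>)
  have n: "j + 1 < ?n" "i < k" using ijk by auto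
  note facts = s1 s2 ijk n
  from ty[OF si] ty[OF sj] ty[OF sk] show False
    by (elim disjE) (blast intro: facts)+
qed

definition S3 :: "nat \<Rightarrow> (nat \<times> nat) set set" where
  "S3 r = (\<lambda>(x,y). {(x,y),(x,y+1)}) ` ({0..<r} \<times> {0..<2})"

lemma S3_card: "card (S3 r) = 2 * r"
  unfolding S3_def by (subst card_image) (auto simp: inj_on_def doubleton_eq_iff)

lemma S3_gp:
  assumes r: "3 \<le> r"
  shows "edge_gp_set (GV r 3) GA (S3 r)"
proof (rule gp_intro)
  show "S3 r \<subseteq> graph_edges (GV r 3) GA"
    unfolding S3_def using ge_v[of _ r _ 3] by auto
next
  fix xs i j k
  assume g: "geodesic (GV r 3) GA xs" and ijk: "i < j" "j < k" "k + 1 < length xs"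
    and si: "{xs!i, xs!(i+1)} \<in> S3 r" and sj: "{xs!j, xs!(j+1)} \<in> S3 r" and sk: "{xs!k, xs!(k+1)} \<in> S3 r"
  have mY: "mono_seq (\<lambda>t. snd (xs!t)) (length xs)" by (rule geo_mono2[OF g])
  have ty: "snd (xs!t) \<noteq> snd (xs!(t+1)) \<and> snd (xs!t) \<le> 2 \<and> snd (xs!(t+1)) \<le> 2" if "{xs!t, xs!(t+1)} \<in> S3 r" for t
  proof -
    from that obtain x y where "y < 2" "{xs!t, xs!(t+1)} = {(x,y),(x,y+1)}" unfolding S3_def by auto
    then show ?thesis by (auto simp: doubleton_eq_iff)
  qed
  show False
    by (rule G3[OF mY ijk]) (use ty[OF si] ty[OF sj] ty[OF sk] in auto)
qed



lemma GV_finite: "finite (GV r s)"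
  by (simp add: path_V_def)

lemma ge_finite: "finite (graph_edges (GV r s) GA)"
proof -
  have "graph_edges (GV r s) GA \<subseteq> (\<lambda>(u,v). {u,v}) ` (GV r s \<times> GV r s)"
    unfolding graph_edges_def by auto
  moreover have "finite ((\<lambda>(u,v). {u,v}) ` (GV r s \<times> GV r s))" using GV_finite by simp
  ultimately show ?thesis by (rule finite_subset)
qed

lemma gp_finite: "edge_gp_set (GV r s) GA S \<Longrightarrow> finite S"
  unfolding edge_gp_set_def using ge_finite finite_subset by blast

definition fam :: "nat \<Rightarrow> nat \<Rightarrow> nat \<times> nat \<Rightarrow> (nat \<times> nat) list" where
  "fam r s k = (if fst k = 0 then map (rnef r s (snd k)) [0..<r+s-1]
      else if fst k = 1 then map (rnwf r s (snd k)) [0..<r+s-1]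
      else if fst k = 2 then map (cnef r s (snd k)) [0..<r+s-1]
      else map (cnwf r s (snd k)) [0..<r+s-1])"

lemma fam_simps:
  "fam r s (0,n) = map (rnef r s n) [0..<r+s-1]"
  "fam r s (1,n) = map (rnwf r s n) [0..<r+s-1]"
  "fam r s (2,n) = map (cnef r s n) [0..<r+s-1]"
  "fam r s (3,n) = map (cnwf r s n) [0..<r+s-1]"
  by (simp_all add: fam_def)

lemma fam_geo:
  assumes "1 \<le> r" "2 \<le> s" "(t = 0 \<or> t = 1) \<and> n < s - 1 \<or> (t = 2 \<or> t = 3) \<and> n < r"
  shows "geodesic (GV r s) GA (fam r s (t,n))"
  using assms cne_geo[OF assms(1,2)] cnw_geo[OF assms(1,2)] rne_geo[OF assms(1,2)] rnw_geo[OF assms(1,2)]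
  by (auto simp: fam_def)

definition K4 :: "nat \<Rightarrow> nat \<Rightarrow> (nat \<times> nat) set" where
  "K4 r s = ({0,1} \<times> {1..<s-1}) \<union> ({2,3} \<times> {1..<r-1})"

lemma K4_card: "4 \<le> r \<Longrightarrow> 4 \<le> s \<Longrightarrow> card (K4 r s) = 2 * r + 2 * s - 8"
proof -
  assume r4: "4 \<le> r" and s4: "4 \<le> s"
  have d: "({0,1} \<times> {1..<s-1}) \<inter> ({2,3} \<times> {1..<r-1}) = ({} :: (nat \<times> nat) set)" by auto
  have "card (K4 r s) = card ({0::nat,1} \<times> {1..<s-1}) + card ({2::nat,3} \<times> {1..<r-1})"
    unfolding K4_def by (rule card_Un_disjoint) (use d in auto)
  also have "\<dots> = 2 * (s - 2) + 2 * (r - 2)" by (simp add: card_cartesian_product)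
  finally show ?thesis using r4 s4 by linarith
qed

context
  fixes r s :: nat
  assumes s4: "4 \<le> s" and sr: "s \<le> r"
begin

lemma r1: "1 \<le> r" using s4 sr by simp
lemma s2: "2 \<le> s" using s4 by simp

lemma cover4:
  assumes "e \<in> graph_edges (GV r s) GA"
  shows "\<exists>k1\<in>K4 r s. \<exists>k2\<in>K4 r s. k1 \<noteq> k2 \<and> e \<in> walk_edges (fam r s k1) \<and> e \<in> walk_edges (fam r s k2)"
proof -
  note R = r1 s2
  have h1: "1 < r - 1" "r - 2 < r - 1" "1 \<le> r - 2" "1 < s - 1" "s - 2 < s - 1" "1 \<le> s - 2" using s4 sr by linarith+
  from edge_cases[OF assms] show ?thesis
  proof (elim disjE exE conjE)
    fix x y assume x: "x + 1 < r" and y: "y < s" and e: "e = {(x,y),(x+1,y)}"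
    consider "0 < y" "y < s - 1" | "y = 0" | "y = s - 1" using y by linarith
    then show ?thesis
    proof cases
      case 1
      show ?thesis
        by (rule bexI[of _ "(0,y)"], rule bexI[of _ "(1,y)"])
           (use 1 x e rne_h[OF R, of y x] rnw_h[OF R, of y x] in \<open>auto simp: fam_def K4_def\<close>)
    next
      case 2
      have P: "\<exists>t\<in>{2,3}. e \<in> walk_edges (fam r s (t,i))" if "1 \<le> i" "i < r - 1" for i
      proof (cases "x < i")
        case True then show ?thesis using cne_h0[OF R, of i x] that e 2 by (auto simp: fam_def)
      next
        case False then show ?thesis using cnw_h0[OF R, of i x] that e 2 x by (auto simp: fam_def)
      qed
      obtain t1 where t1: "t1 \<in> {2,3}" "e \<in> walk_edges (fam r s (t1,1))" using P[of 1] h1 by auto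
      obtain t2 where t2: "t2 \<in> {2,3}" "e \<in> walk_edges (fam r s (t2,r-2))" using P[of "r-2"] h1 by auto
      show ?thesis
        by (rule bexI[of _ "(t1,1)"], rule bexI[of _ "(t2,r-2)"]) (use t1 t2 s4 sr in \<open>auto simp: K4_def\<close>)
    next
      case 3
      have P: "\<exists>t\<in>{2,3}. e \<in> walk_edges (fam r s (t,i))" if "1 \<le> i" "i < r - 1" for i
      proof (cases "i \<le> x")
        case True then show ?thesis using cne_ht[OF R, of i x] that e 3 x by (auto simp: fam_def)
      next
        case False then show ?thesis using cnw_ht[OF R, of i x] that e 3 by (auto simp: fam_def)
      qed
      obtain t1 where t1: "t1 \<in> {2,3}" "e \<in> walk_edges (fam r s (t1,1))" using P[of 1] h1 by auto
      obtain t2 where t2: "t2 \<in> {2,3}" "e \<in> walk_edges (fam r s (t2,r-2))" using P[of "r-2"] h1 by auto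
      show ?thesis
        by (rule bexI[of _ "(t1,1)"], rule bexI[of _ "(t2,r-2)"]) (use t1 t2 s4 sr in \<open>auto simp: K4_def\<close>)
    qed
  next
    fix x y assume x: "x < r" and y: "y + 1 < s" and e: "e = {(x,y),(x,y+1)}"
    consider "0 < x" "x < r - 1" | "x = 0" | "x = r - 1" using x by linarith
    then show ?thesis
    proof cases
      case 1
      show ?thesis
        by (rule bexI[of _ "(2,x)"], rule bexI[of _ "(3,x)"])
           (use 1 x y e cne_v[OF R, of x y] cnw_v[OF R, of x y] in \<open>auto simp: fam_def K4_def\<close>)
    next
      case 2
      have P: "\<exists>t\<in>{0,1}. e \<in> walk_edges (fam r s (t,j))" if "1 \<le> j" "j < s - 1" for j
      proof (cases "y < j")
        case True then show ?thesis using rne_v0[OF R, of j y] that e 2 by (auto simp: fam_def)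
      next
        case False then show ?thesis using rnw_v0[OF R, of j y] that e 2 y by (auto simp: fam_def)
      qed
      obtain t1 where t1: "t1 \<in> {0,1}" "e \<in> walk_edges (fam r s (t1,1))" using P[of 1] h1 by auto
      obtain t2 where t2: "t2 \<in> {0,1}" "e \<in> walk_edges (fam r s (t2,s-2))" using P[of "s-2"] h1 by auto
      show ?thesis
        by (rule bexI[of _ "(t1,1)"], rule bexI[of _ "(t2,s-2)"]) (use t1 t2 s4 sr in \<open>auto simp: K4_def\<close>)
    next
      case 3
      have P: "\<exists>t\<in>{0,1}. e \<in> walk_edges (fam r s (t,j))" if "1 \<le> j" "j < s - 1" for j
      proof (cases "j \<le> y")
        case True then show ?thesis using rne_vr[OF R, of j y] that e 3 y by (auto simp: fam_def)
      next
        case False then show ?thesis using rnw_vr[OF R, of j y] that e 3 by (auto simp: fam_def)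
      qed
      obtain t1 where t1: "t1 \<in> {0,1}" "e \<in> walk_edges (fam r s (t1,1))" using P[of 1] h1 by auto
      obtain t2 where t2: "t2 \<in> {0,1}" "e \<in> walk_edges (fam r s (t2,s-2))" using P[of "s-2"] h1 by auto
      show ?thesis
        by (rule bexI[of _ "(t1,1)"], rule bexI[of _ "(t2,s-2)"]) (use t1 t2 s4 sr in \<open>auto simp: K4_def\<close>)
    qed
  qed
qed

lemma ub4:
  assumes gp: "edge_gp_set (GV r s) GA S"
  shows "card S \<le> 2 * r + 2 * s - 8"
proof -
  have "card S \<le> card (K4 r s)"
  proof (rule double_count[where E = "\<lambda>k. walk_edges (fam r s k)"])
    show "finite (K4 r s)" by (simp add: K4_def)
    show "finite S" by (rule gp_finite[OF gp])
  next
    fix k assume k: "k \<in> K4 r s"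
    obtain t n where tn: "k = (t,n)" by (cases k)
    have "geodesic (GV r s) GA (fam r s (t,n))"
      by (rule fam_geo[OF r1 s2]) (use k tn in \<open>auto simp: K4_def\<close>)
    then show "card (S \<inter> walk_edges (fam r s k)) \<le> 2" using gp_card[OF gp] tn by simp
  next
    fix e assume "e \<in> S"
    then have "e \<in> graph_edges (GV r s) GA" using gp unfolding edge_gp_set_def by blast
    then show "\<exists>k1\<in>K4 r s. \<exists>k2\<in>K4 r s. k1 \<noteq> k2 \<and> e \<in> walk_edges (fam r s k1) \<and> e \<in> walk_edges (fam r s k2)"
      by (rule cover4)
  qed
  then show ?thesis using K4_card[of r s] s4 sr by simp
qed

end



definition K3 :: "nat \<Rightarrow> (nat \<times> nat) set" where
  "K3 r = {(0,1),(1,1)} \<union> ({2} \<times> {0..<r}) \<union> ({3} \<times> {1..<r-1})"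

lemma K3_card: "3 \<le> r \<Longrightarrow> card (K3 r) = 2 * r"
proof -
  assume r3: "3 \<le> r"
  have d1: "{(0::nat,1::nat),(1,1)} \<inter> ({2} \<times> {0..<r}) = {}" by auto
  have d2: "({(0::nat,1::nat),(1,1)} \<union> ({2} \<times> {0..<r})) \<inter> ({3} \<times> {1..<r-1}) = {}" by auto
  have "card (K3 r) = card ({(0::nat,1::nat),(1,1)} \<union> ({2} \<times> {0..<r})) + card ({3::nat} \<times> {1..<r-1})"
    unfolding K3_def by (rule card_Un_disjoint) (use d2 in auto)
  also have "card ({(0::nat,1::nat),(1,1)} \<union> ({2} \<times> {0..<r})) = 2 + r"
    by (subst card_Un_disjoint) (use d1 in \<open>auto simp: card_cartesian_product\<close>)
  also have "card ({3::nat} \<times> {1..<r-1}) = r - 2" by (simp add: card_cartesian_product)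
  finally show ?thesis using r3 by linarith
qed

context
  fixes r :: nat
  assumes r3: "3 \<le> r"
begin

lemma cover3:
  assumes "e \<in> graph_edges (GV r 3) GA"
  shows "\<exists>k1\<in>K3 r. \<exists>k2\<in>K3 r. k1 \<noteq> k2 \<and> e \<in> walk_edges (fam r 3 k1) \<and> e \<in> walk_edges (fam r 3 k2)"
proof -
  have R: "1 \<le> r" "2 \<le> (3::nat)" using r3 by auto
  from edge_cases[OF assms] show ?thesis
  proof (elim disjE exE conjE)
    fix x y assume x: "x + 1 < r" and y: "y < 3" and e: "e = {(x,y),(x+1,y)}"
    consider "y = 1" | "y = 0" | "y = 2" using y by linarith
    then show ?thesis
    proof cases
      case 1
      show ?thesis
        by (rule bexI[of _ "(0,1)"], rule bexI[of _ "(1,1)"])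
           (use 1 x e rne_h[OF R, of 1 x] rnw_h[OF R, of 1 x] in \<open>auto simp: fam_def K3_def\<close>)
    next
      case 2
      have k1: "e \<in> walk_edges (fam r 3 (2, r-1))" using cne_h0[OF R, of "r-1" x] x e 2 r3 by (auto simp: fam_def)
      show ?thesis
      proof (cases "1 \<le> x")
        case True
        have "e \<in> walk_edges (fam r 3 (3, 1))" using cnw_h0[OF R, of 1 x] x e 2 r3 True by (auto simp: fam_def)
        then show ?thesis using k1 r3 by (intro bexI[of _ "(2,r-1)"] bexI[of _ "(3,1)"]) (auto simp: K3_def)
      next
        case False
        have "e \<in> walk_edges (fam r 3 (2, 1))" using cne_h0[OF R, of 1 x] x e 2 r3 False by (auto simp: fam_def)
        then show ?thesis using k1 r3 by (intro bexI[of _ "(2,r-1)"] bexI[of _ "(2,1)"]) (auto simp: K3_def)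
      qed
    next
      case 3
      have k1: "e \<in> walk_edges (fam r 3 (2, 0))" using cne_ht[OF R, of 0 x] x e 3 r3 by (auto simp: fam_def)
      show ?thesis
      proof (cases "x < r - 2")
        case True
        have "e \<in> walk_edges (fam r 3 (3, r-2))" using cnw_ht[OF R, of "r-2" x] x e 3 r3 True by (auto simp: fam_def)
        then show ?thesis using k1 r3 by (intro bexI[of _ "(2,0)"] bexI[of _ "(3,r-2)"]) (auto simp: K3_def)
      next
        case False
        have "e \<in> walk_edges (fam r 3 (2, r-2))" using cne_ht[OF R, of "r-2" x] x e 3 r3 False by (auto simp: fam_def)
        then show ?thesis using k1 r3 by (intro bexI[of _ "(2,0)"] bexI[of _ "(2,r-2)"]) (auto simp: K3_def)
      qed
    qed
  next
    fix x y assume x: "x < r" and y: "y + 1 < 3" and e: "e = {(x,y),(x,y+1)}"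
    have k1: "e \<in> walk_edges (fam r 3 (2, x))" using cne_v[OF R, of x y] x y e by (auto simp: fam_def)
    consider "0 < x" "x < r - 1" | "x = 0" | "x = r - 1" using x by linarith
    then show ?thesis
    proof cases
      case 1
      have "e \<in> walk_edges (fam r 3 (3, x))" using cnw_v[OF R, of x y] x y e by (auto simp: fam_def)
      then show ?thesis using k1 1 by (intro bexI[of _ "(2,x)"] bexI[of _ "(3,x)"]) (auto simp: K3_def)
    next
      case 2
      have "e \<in> walk_edges (fam r 3 (0, 1)) \<or> e \<in> walk_edges (fam r 3 (1, 1))"
      proof (cases "y < 1")
        case True then show ?thesis using rne_v0[OF R, of 1 y] e 2 by (auto simp: fam_def)
      next
        case False then show ?thesis using rnw_v0[OF R, of 1 y] e 2 y by (auto simp: fam_def)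
      qed
      then show ?thesis using k1 x
        by (elim disjE) ((intro bexI[of _ "(2,x)"] bexI[of _ "(0,1)"]; auto simp: K3_def),
                         (intro bexI[of _ "(2,x)"] bexI[of _ "(1,1)"]; auto simp: K3_def))
    next
      case 3
      have "e \<in> walk_edges (fam r 3 (0, 1)) \<or> e \<in> walk_edges (fam r 3 (1, 1))"
      proof (cases "1 \<le> y")
        case True then show ?thesis using rne_vr[OF R, of 1 y] e 3 y by (auto simp: fam_def)
      next
        case False then show ?thesis using rnw_vr[OF R, of 1 y] e 3 by (auto simp: fam_def)
      qed
      then show ?thesis using k1 x
        by (elim disjE) ((intro bexI[of _ "(2,x)"] bexI[of _ "(0,1)"]; auto simp: K3_def),
                         (intro bexI[of _ "(2,x)"] bexI[of _ "(1,1)"]; auto simp: K3_def))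
    qed
  qed
qed

lemma ub3:
  assumes gp: "edge_gp_set (GV r 3) GA S"
  shows "card S \<le> 2 * r"
proof -
  have "card S \<le> card (K3 r)"
  proof (rule double_count[where E = "\<lambda>k. walk_edges (fam r 3 k)"])
    show "finite (K3 r)" by (simp add: K3_def)
    show "finite S" by (rule gp_finite[OF gp])
  next
    fix k assume k: "k \<in> K3 r"
    obtain t n where tn: "k = (t,n)" by (cases k)
    have "geodesic (GV r 3) GA (fam r 3 (t,n))"
      by (rule fam_geo) (use k tn r3 in \<open>auto simp: K3_def\<close>)
    then show "card (S \<inter> walk_edges (fam r 3 k)) \<le> 2" using gp_card[OF gp] tn by simp
  next
    fix e assume "e \<in> S"
    then have "e \<in> graph_edges (GV r 3) GA" using gp unfolding edge_gp_set_def by blast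
    then show "\<exists>k1\<in>K3 r. \<exists>k2\<in>K3 r. k1 \<noteq> k2 \<and> e \<in> walk_edges (fam r 3 k1) \<and> e \<in> walk_edges (fam r 3 k2)"
      by (rule cover3)
  qed
  then show ?thesis using K3_card[OF r3] by simp
qed

end



lemma ub2:
  assumes r2: "2 \<le> r" and gp: "edge_gp_set (GV r 2) GA S"
  shows "card S \<le> r + 2"
proof -
  have R: "1 \<le> r" "2 \<le> (2::nat)" using r2 by auto
  define Vt where "Vt = (\<lambda>k. {(k,0::nat),(k,1::nat)}) ` {0..<r}"
  have fS: "finite S" by (rule gp_finite[OF gp])
  have fVt: "finite Vt" unfolding Vt_def by simp
  have cVt: "card (S \<inter> Vt) \<le> r"
  proof -
    have "card (S \<inter> Vt) \<le> card Vt" by (rule card_mono[OF fVt]) auto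
    also have "\<dots> \<le> r" unfolding Vt_def using card_image_le[of "{0..<r}"] by simp
    finally show ?thesis .
  qed
  have hor: "\<exists>x y. x + 1 < r \<and> y < 2 \<and> e = {(x,y),(x+1,y)}" if "e \<in> S" "e \<notin> Vt" for e
  proof -
    have "e \<in> graph_edges (GV r 2) GA" using that gp unfolding edge_gp_set_def by blast
    from edge_cases[OF this] show ?thesis
    proof (elim disjE exE conjE)
      fix x y assume "x < r" "y + 1 < 2" "e = {(x,y),(x,y+1)}"
      then have "e \<in> Vt" unfolding Vt_def by auto
      then show ?thesis using that by blast
    qed blast
  qed
  have split: "card S \<le> card (S - Vt) + card (S \<inter> Vt)"
  proof -
    have "S = (S - Vt) \<union> (S \<inter> Vt)" by blast
    then have "card S = card ((S - Vt) \<union> (S \<inter> Vt))" by simp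
    also have "\<dots> \<le> card (S - Vt) + card (S \<inter> Vt)" by (rule card_Un_le)
    finally show ?thesis .
  qed
  show ?thesis
  proof (cases "S \<inter> Vt = {}")
    case False
    then obtain k where k: "k < r" and e0: "{(k,0),(k,1)} \<in> S" unfolding Vt_def by auto
    let ?e0 = "{(k,0::nat),(k,1::nat)}"
    let ?A1 = "S \<inter> walk_edges (fam r 2 (2,k))"
    let ?A2 = "S \<inter> walk_edges (fam r 2 (3,k))"
    have g1: "geodesic (GV r 2) GA (fam r 2 (2,k))" by (rule fam_geo[OF R]) (use k in auto)
    have g2: "geodesic (GV r 2) GA (fam r 2 (3,k))" by (rule fam_geo[OF R]) (use k in auto)
    have c1: "card ?A1 \<le> 2" by (rule gp_card[OF gp g1])
    have c2: "card ?A2 \<le> 2" by (rule gp_card[OF gp g2])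
    have i1: "?e0 \<in> ?A1" using e0 cne_v[OF R, of k 0] k by (auto simp: fam_def)
    have i2: "?e0 \<in> ?A2" using e0 cnw_v[OF R, of k 0] k by (auto simp: fam_def)
    have f1: "finite ?A1" "finite ?A2" using fS by auto
    have d1: "card (?A1 - {?e0}) \<le> 1" using c1 i1 f1 by (simp add: card_Diff_singleton)
    have d2: "card (?A2 - {?e0}) \<le> 1" using c2 i2 f1 by (simp add: card_Diff_singleton)
    have sub: "S - Vt \<subseteq> (?A1 - {?e0}) \<union> (?A2 - {?e0})"
    proof
      fix e assume eS: "e \<in> S - Vt"
      have ne: "e \<noteq> ?e0" using eS k unfolding Vt_def by auto
      from hor[of e] eS obtain x y where x: "x + 1 < r" "y < 2" "e = {(x,y),(x+1,y)}" by auto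
      consider "y = 0" "x < k" | "y = 0" "k \<le> x" | "y = 1" "k \<le> x" | "y = 1" "x < k" using x by linarith
      then have "e \<in> walk_edges (fam r 2 (2,k)) \<or> e \<in> walk_edges (fam r 2 (3,k))"
      proof cases
        case 1 then show ?thesis using cne_h0[OF R, of k x] x k by (auto simp: fam_def)
      next
        case 2 then show ?thesis using cnw_h0[OF R, of k x] x k by (auto simp: fam_def)
      next
        case 3 then show ?thesis using cne_ht[OF R, of k x] x k by (auto simp: fam_def)
      next
        case 4 then show ?thesis using cnw_ht[OF R, of k x] x k by (auto simp: fam_def)
      qed
      then show "e \<in> (?A1 - {?e0}) \<union> (?A2 - {?e0})" using eS ne by auto
    qed
    have "card (S - Vt) \<le> card ((?A1 - {?e0}) \<union> (?A2 - {?e0}))"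
      by (rule card_mono[OF _ sub]) (use f1 in auto)
    also have "\<dots> \<le> card (?A1 - {?e0}) + card (?A2 - {?e0})" by (rule card_Un_le)
    finally have "card (S - Vt) \<le> 2" using d1 d2 by linarith
    then show ?thesis using split cVt by linarith
  next
    case True
    let ?A1 = "S \<inter> walk_edges (fam r 2 (0,0))"
    let ?A2 = "S \<inter> walk_edges (fam r 2 (2,0))"
    have g1: "geodesic (GV r 2) GA (fam r 2 (0,0))" by (rule fam_geo[OF R]) auto
    have g2: "geodesic (GV r 2) GA (fam r 2 (2,0))" by (rule fam_geo[OF R]) (use r2 in auto)
    have c1: "card ?A1 \<le> 2" by (rule gp_card[OF gp g1])
    have c2: "card ?A2 \<le> 2" by (rule gp_card[OF gp g2])
    have sub: "S \<subseteq> ?A1 \<union> ?A2"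
    proof
      fix e assume eS: "e \<in> S"
      then have "e \<notin> Vt" using True by blast
      from hor[OF eS this] obtain x y where x: "x + 1 < r" "y < 2" "e = {(x,y),(x+1,y)}" by auto
      consider "y = 0" | "y = 1" using x by linarith
      then have "e \<in> walk_edges (fam r 2 (0,0)) \<or> e \<in> walk_edges (fam r 2 (2,0))"
      proof cases
        case 1 then show ?thesis using rne_h[OF R, of 0 x] x by (auto simp: fam_def)
      next
        case 2 then show ?thesis using cne_ht[OF R, of 0 x] x by (auto simp: fam_def)
      qed
      then show "e \<in> ?A1 \<union> ?A2" using eS by auto
    qed
    have "card S \<le> card (?A1 \<union> ?A2)" by (rule card_mono[OF _ sub]) (use fS in auto)
    also have "\<dots> \<le> card ?A1 + card ?A2" by (rule card_Un_le)
    finally show ?thesis using c1 c2 r2 by linarith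
  qed
qed

theorem theorem4p1:
  fixes r s :: nat
  assumes "2 \<le> s" and "s \<le> r"
  shows "gp_e (path_V r \<times> path_V s) (cart_adj path_adj path_adj) =
           (if s = 2 then r + 2 else if s = 3 then 2 * r else 2 * r + 2 * s - 8)"
proof -
  define v where "v = (if s = 2 then r + 2 else if s = 3 then 2 * r else 2 * r + 2 * s - 8)"
  have ub: "card S \<le> v" if gp: "edge_gp_set (GV r s) GA S" for S
  proof -
    consider "s = 2" | "s = 3" | "4 \<le> s" using assms by linarith
    then show ?thesis
    proof cases
      case 1 then show ?thesis using ub2[of r S] gp assms unfolding v_def by auto
    next
      case 2 then show ?thesis using ub3[of r S] gp assms unfolding v_def by auto
    next
      case 3 then show ?thesis using ub4[of s r S] gp assms unfolding v_def by auto
    qed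
  qed
  have ex: "\<exists>S. edge_gp_set (GV r s) GA S \<and> card S = v"
  proof -
    consider "s = 2" | "s = 3" | "4 \<le> s" using assms by linarith
    then show ?thesis
    proof cases
      case 1 then show ?thesis using S2_gp[of r] S2_card[of r] assms unfolding v_def by auto
    next
      case 2 then show ?thesis using S3_gp[of r] S3_card[of r] assms unfolding v_def by auto
    next
      case 3 then show ?thesis using S4_gp[of r s] S4_card[of r s] assms unfolding v_def by auto
    qed
  qed
  have "gp_e (GV r s) GA = v"
    unfolding gp_e_def
  proof (rule Max_eqI)
    show "finite (card ` {S. edge_gp_set (GV r s) GA S})"
      by (rule finite_subset[of _ "{..v}"]) (use ub in auto)
    show "y \<le> v" if "y \<in> card ` {S. edge_gp_set (GV r s) GA S}" for y using that ub by auto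
    show "v \<in> card ` {S. edge_gp_set (GV r s) GA S}" using ex by auto
  qed
  then show ?thesis unfolding v_def .
qed


end
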